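(* Let $(M,d)$ be a pointed metric space. The space $\mathrm{Lip}_0(M)$ has the $w^*$-D2P if and only if $M$ has the Lip-LTP.
   Context: $M$ has base point $0$; $\mathrm{Lip}_0(M)$ is the real Banach space of Lipschitz $f\colon M\to\mathbb R$ with $f(0)=0$, normed by the best Lipschitz constant, with unit ball $B_{\mathrm{Lip}_0(M)}$. $\mathrm{Lip}_0(M)$ is the dual of the Lipschitz-free space $\mathcal F(M)$, the norm-closed linear span of the evaluations $\delta_x$ ($x\in M$) in $\mathrm{Lip}_0(M)^*$; the weak-star topology on $\mathrm{Lip}_0(M)$ is the one induced by $\mathcal F(M)$. $\mathrm{Lip}_0(M)$ has the $w^*$-D2P if every nonempty relatively weak-star open subset of $B_{\mathrm{Lip}_0(M)}$ has diameter $2$. $M$ has the Lip-LTP if for every finite $N\subseteq M$, every $\varepsilon>0$ and every $f\in B_{\mathrm{Lip}_0(M)}$ there exist $u,v\in M$ with $u\ne v$ such that for all $x,y\in N$, $(1-\varepsilon)(|f(x)-f(y)|+d(u,v))\le d(x,u)+d(y,v)$. *)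

theory Defs
  imports "HOL-Analysis.Analysis"
begin

definition Lip0 :: "'a::metric_space \<Rightarrow> ('a \<Rightarrow> real) set" where
  "Lip0 z = {f. f z = 0 \<and> (\<exists>C. C-lipschitz_on UNIV f)}"

definition lip_norm :: "('a::metric_space \<Rightarrow> real) \<Rightarrow> real" where
  "lip_norm f = Inf {C. 0 \<le> C \<and> C-lipschitz_on UNIV f}"

definition Lip0_ball :: "'a::metric_space \<Rightarrow> ('a \<Rightarrow> real) set" where
  "Lip0_ball z = {f \<in> Lip0 z. lip_norm f \<le> 1}"

text \<open>The Lipschitz-free space F(M), viewed as functionals on Lip0: the elements of
  Lip0^* that are norm limits (in the dual norm) of finite linear combinations of
  evaluation functionals delta_x.\<close>
definition free_space :: "'a::metric_space \<Rightarrow> (('a \<Rightarrow> real) \<Rightarrow> real) set" where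
  "free_space z = {\<phi>. \<forall>e>0. \<exists>S a. finite S \<and>
      (\<forall>f\<in>Lip0 z. \<bar>\<phi> f - (\<Sum>x\<in>S. a x * f x)\<bar> \<le> e * lip_norm f)}"

definition wstar_open :: "'a::metric_space \<Rightarrow> ('a \<Rightarrow> real) set \<Rightarrow> bool" where
  "wstar_open z U \<longleftrightarrow> U \<subseteq> Lip0 z \<and>
     (\<forall>f\<in>U. \<exists>\<Phi> e. finite \<Phi> \<and> \<Phi> \<subseteq> free_space z \<and> e > 0 \<and>
        {g \<in> Lip0 z. \<forall>\<phi>\<in>\<Phi>. \<bar>\<phi> g - \<phi> f\<bar> < e} \<subseteq> U)"

definition wstar_D2P :: "'a::metric_space \<Rightarrow> bool" where
  "wstar_D2P z \<longleftrightarrow> (\<forall>U. wstar_open z U \<and> U \<inter> Lip0_ball z \<noteq> {} \<longrightarrow>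
     Sup {lip_norm (\<lambda>x. f x - g x) | f g. f \<in> U \<inter> Lip0_ball z \<and> g \<in> U \<inter> Lip0_ball z} = 2)"

definition Lip_LTP :: "'a::metric_space \<Rightarrow> bool" where
  "Lip_LTP z \<longleftrightarrow> (\<forall>N \<epsilon> f. finite N \<and> \<epsilon> > 0 \<and> f \<in> Lip0_ball z \<longrightarrow>
     (\<exists>u v. u \<noteq> v \<and> (\<forall>x\<in>N. \<forall>y\<in>N.
        (1 - \<epsilon>) * (\<bar>f x - f y\<bar> + dist u v) \<le> dist x u + dist y v)))"

end

theory Submission
  imports Defs
begin


lemma lip_norm_le:
  assumes "C-lipschitz_on UNIV f"
  shows "lip_norm f \<le> C"
  unfolding lip_norm_def
  by (rule cInf_lower) (use assms lipschitz_on_nonneg in \<open>auto intro: bdd_belowI[of _ 0]\<close>)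

lemma lip_norm_nonneg:
  assumes "C-lipschitz_on UNIV f"
  shows "0 \<le> lip_norm f"
  unfolding lip_norm_def
  by (rule cInf_greatest) (use assms lipschitz_on_nonneg in auto)

lemma lip_norm_bound:
  assumes "C-lipschitz_on UNIV f"
  shows "\<bar>f x - f y\<bar> \<le> lip_norm f * dist x y"
proof (cases "x = y")
  case True then show ?thesis by simp
next
  case False
  then have d: "dist x y > 0" by simp
  have "\<bar>f x - f y\<bar> / dist x y \<le> lip_norm f"
    unfolding lip_norm_def
  proof (rule cInf_greatest)
    show "{C. 0 \<le> C \<and> C-lipschitz_on UNIV f} \<noteq> {}" using assms lipschitz_on_nonneg by auto
    fix D assume "D \<in> {C. 0 \<le> C \<and> C-lipschitz_on UNIV f}"
    then have "dist (f x) (f y) \<le> D * dist x y" by (auto intro: lipschitz_onD)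
    then show "\<bar>f x - f y\<bar> / dist x y \<le> D" using d by (simp add: dist_real_def divide_le_eq)
  qed
  then show ?thesis using d by (simp add: divide_le_eq)
qed

lemma lip_norm_lip:
  assumes "C-lipschitz_on UNIV f"
  shows "(lip_norm f)-lipschitz_on UNIV f"
  using lip_norm_bound[OF assms] lip_norm_nonneg[OF assms]
  by (intro lipschitz_onI) (auto simp: dist_real_def)

lemma Lip0_lip: "f \<in> Lip0 z \<Longrightarrow> \<exists>C. C-lipschitz_on UNIV f"
  by (auto simp: Lip0_def)

lemma Lip0_diff:
  assumes "f \<in> Lip0 z" "g \<in> Lip0 z"
  shows "(\<lambda>x. f x - g x) \<in> Lip0 z" "lip_norm (\<lambda>x. f x - g x) \<le> lip_norm f + lip_norm g"
proof -
  obtain C D where C: "C-lipschitz_on UNIV f" and D: "D-lipschitz_on UNIV g"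
    using assms by (auto simp: Lip0_def)
  have *: "(lip_norm f + lip_norm g)-lipschitz_on UNIV (\<lambda>x. f x - g x)"
    using lipschitz_on_diff[OF lip_norm_lip[OF C] lip_norm_lip[OF D]] .
  then show "(\<lambda>x. f x - g x) \<in> Lip0 z" using assms by (auto simp: Lip0_def)
  show "lip_norm (\<lambda>x. f x - g x) \<le> lip_norm f + lip_norm g" by (rule lip_norm_le[OF *])
qed

lemma lip_norm_big:
  assumes "f \<in> Lip0 z" "lip_norm f > c" "c \<ge> 0"
  shows "\<exists>p q. f p - f q > c * dist p q"
proof (rule ccontr)
  assume "\<not> ?thesis"
  then have "\<And>p q. f p - f q \<le> c * dist p q" by (auto simp: not_less)
  then have "c-lipschitz_on UNIV f"
    using assms(3) by (intro lipschitz_onI) (metis dist_real_def abs_le_iff dist_commute minus_diff_eq)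
  then show False using lip_norm_le assms(2) by fastforce
qed



lemma eval_free: "(\<lambda>g. g x) \<in> free_space z"
proof -
  have "\<forall>f\<in>Lip0 z. 0 \<le> lip_norm f" using lip_norm_nonneg by (auto simp: Lip0_def)
  then show ?thesis unfolding free_space_def mem_Collect_eq
    by (intro allI impI exI[of _ "{x}"] exI[of _ "\<lambda>_. 1"]) auto
qed

lemma nbhd_open:
  assumes "finite N"
  shows "wstar_open z {g \<in> Lip0 z. \<forall>x\<in>N. \<bar>g x - f x\<bar> < \<eta>}" (is "wstar_open z ?U")
  unfolding wstar_open_def
proof (intro conjI ballI)
  show "?U \<subseteq> Lip0 z" by auto
  fix f' assume f': "f' \<in> ?U"
  define e where "e = Min (insert 1 ((\<lambda>x. \<eta> - \<bar>f' x - f x\<bar>) ` N))"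
  have "\<forall>x\<in>N. \<bar>f' x - f x\<bar> < \<eta>" using f' by simp
  have epos: "e > 0" unfolding e_def using assms \<open>\<forall>x\<in>N. \<bar>f' x - f x\<bar> < \<eta>\<close>
  proof (subst Min_gr_iff)
    show "\<forall>a\<in>insert 1 ((\<lambda>x. \<eta> - \<bar>f' x - f x\<bar>) ` N). 0 < a"
      using \<open>\<forall>x\<in>N. \<bar>f' x - f x\<bar> < \<eta>\<close> by fastforce
  qed auto
  have ele: "\<And>x. x \<in> N \<Longrightarrow> e \<le> \<eta> - \<bar>f' x - f x\<bar>" unfolding e_def using assms by auto
  show "\<exists>\<Phi> e. finite \<Phi> \<and> \<Phi> \<subseteq> free_space z \<and> e > 0 \<and>
        {g \<in> Lip0 z. \<forall>\<phi>\<in>\<Phi>. \<bar>\<phi> g - \<phi> f'\<bar> < e} \<subseteq> ?U"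
  proof (intro exI conjI)
    show "finite ((\<lambda>x g. g x) ` N)" using assms by auto
    show "(\<lambda>x g. g x) ` N \<subseteq> free_space z" using eval_free by auto
    show "e > 0" by fact
    show "{g \<in> Lip0 z. \<forall>\<phi>\<in>(\<lambda>x g. g x) ` N. \<bar>\<phi> g - \<phi> f'\<bar> < e} \<subseteq> ?U"
    proof safe
      fix g x assume "g \<in> Lip0 z" "\<forall>\<phi>\<in>(\<lambda>x g. g x) ` N. \<bar>\<phi> g - \<phi> f'\<bar> < e" "x \<in> N"
      then have "\<bar>g x - f' x\<bar> < e" by auto
      with ele[OF \<open>x \<in> N\<close>] show "\<bar>g x - f x\<bar> < \<eta>" by linarith
    qed
  qed
qed

lemma min_sep:
  assumes "finite (N::'a::metric_space set)"
  shows "\<exists>m>0. \<forall>x\<in>N. \<forall>y\<in>N. x \<noteq> y \<longrightarrow> m \<le> dist x y"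
proof -
  define D where "D = (\<lambda>(x,y). dist x y) ` {p \<in> N \<times> N. fst p \<noteq> snd p}"
  have fD: "finite D" unfolding D_def using assms by auto
  have Dpos: "\<forall>d\<in>D. d > 0" unfolding D_def by auto
  show ?thesis
  proof (intro exI conjI ballI impI)
    show "Min (insert 1 D) > 0" using fD Dpos by (subst Min_gr_iff) auto
    fix x y assume "x \<in> N" "y \<in> N" "x \<noteq> y"
    then have "dist x y \<in> D" unfolding D_def by force
    then show "Min (insert 1 D) \<le> dist x y" using fD by auto
  qed
qed

lemma ball_lip1:
  assumes "g \<in> Lip0_ball z"
  shows "g p - g q \<le> dist p q"
proof -
  obtain C where C: "C-lipschitz_on UNIV g" "lip_norm g \<le> 1" using assms by (auto simp: Lip0_ball_def Lip0_def)
  have "\<bar>g p - g q\<bar> \<le> lip_norm g * dist p q" by (rule lip_norm_bound[OF C(1)])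
  also have "\<dots> \<le> dist p q" using C(2) by (simp add: mult_left_le_one_le lip_norm_nonneg[OF C(1)])
  finally show ?thesis by linarith
qed

lemma key_arith0:
  fixes F D R dxy m a b c :: real
  assumes E: "F + D - a/2 - c/8 < R" and T: "dxy - D \<le> R" and "F \<le> dxy" and "m \<le> dxy"
    and "0 \<le> a" "0 \<le> b"
    and c1: "D \<ge> m/4 \<Longrightarrow> 4*a \<ge> c" and c2: "F \<ge> m/2 \<Longrightarrow> 2*b \<ge> c"
  shows "F + D - b - a \<le> R"
proof -
  consider "D \<ge> m/4" | "D < m/4" "F \<ge> m/2" | "D < m/4" "F < m/2" by linarith
  then show ?thesis
  proof cases
    case 1 then show ?thesis using c1 assms by linarith
  next
    case 2 then show ?thesis using c2 assms by linarith
  next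
    case 3 then show ?thesis using assms by linarith
  qed
qed

lemma key_arith:
  fixes F D R dxy m \<epsilon> :: real
  assumes "0 < \<epsilon>" "m > 0"
    and E: "F + (1 - \<epsilon>/2) * D - \<epsilon> * m / 8 < R"
    and T: "dxy - D \<le> R" and "F \<le> dxy" and "m \<le> dxy" and "0 \<le> F" "0 \<le> D"
  shows "(1 - \<epsilon>) * (F + D) \<le> R"
proof -
  have "F + D - (\<epsilon>*F) - (\<epsilon>*D) \<le> R"
  proof (rule key_arith0[where c="\<epsilon>*m"])
    show "F + D - \<epsilon> * D / 2 - \<epsilon> * m / 8 < R" using E by (simp add: algebra_simps)
    show "D \<ge> m/4 \<Longrightarrow> 4*(\<epsilon>*D) \<ge> \<epsilon>*m"
      using assms by (metis mult.left_commute mult_left_mono less_imp_le mult.commute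
          divide_le_eq zero_less_numeral)
    show "F \<ge> m/2 \<Longrightarrow> 2*(\<epsilon>*F) \<ge> \<epsilon>*m"
      using assms by (metis mult.left_commute mult_left_mono less_imp_le mult.commute
          divide_le_eq zero_less_numeral)
  qed (use assms in auto)
  then show ?thesis by (simp add: algebra_simps)
qed



lemma D2P_LTP_aux:
  assumes D2P: "wstar_D2P z" and N: "finite N" and e: "0 < \<epsilon>" "\<epsilon> \<le> 1/2"
    and f: "f \<in> Lip0_ball z"
  shows "\<exists>u v. u \<noteq> v \<and> (\<forall>x\<in>N. \<forall>y\<in>N.
        (1 - \<epsilon>) * (\<bar>f x - f y\<bar> + dist u v) \<le> dist x u + dist y v)"
proof -
  obtain m where m: "m > 0" "\<And>x y. x\<in>N \<Longrightarrow> y\<in>N \<Longrightarrow> x \<noteq> y \<Longrightarrow> m \<le> dist x y"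
    using min_sep[OF N] by blast
  define \<eta> where "\<eta> = \<epsilon> * m / 16"
  define U where "U = {g \<in> Lip0 z. \<forall>x\<in>N. \<bar>g x - f x\<bar> < \<eta>}"
  have \<eta>pos: "\<eta> > 0" unfolding \<eta>_def using e m by simp
  have Uo: "wstar_open z U" unfolding U_def by (rule nbhd_open[OF N])
  have fU: "f \<in> U \<inter> Lip0_ball z" using f \<eta>pos by (auto simp: U_def Lip0_ball_def)
  then have "Sup {lip_norm (\<lambda>x. g x - h x) | g h. g \<in> U \<inter> Lip0_ball z \<and> h \<in> U \<inter> Lip0_ball z} = 2"
    (is "Sup ?S = 2") using D2P Uo unfolding wstar_D2P_def by blast
  have "\<exists>s\<in>?S. s > 2 - \<epsilon>/2"
  proof (rule ccontr)
    assume "\<not> ?thesis"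
    then have "Sup ?S \<le> 2 - \<epsilon>/2" using fU by (intro cSup_least) (auto simp: not_less)
    then show False using \<open>Sup ?S = 2\<close> e by simp
  qed
  then obtain g h where gh: "g \<in> U \<inter> Lip0_ball z" "h \<in> U \<inter> Lip0_ball z"
     and big: "lip_norm (\<lambda>x. g x - h x) > 2 - \<epsilon>/2" by blast
  have "(\<lambda>x. g x - h x) \<in> Lip0 z" using gh Lip0_diff by (auto simp: Lip0_ball_def)
  from lip_norm_big[OF this big] e obtain u v where
    uv: "(g u - h u) - (g v - h v) > (2 - \<epsilon>/2) * dist u v" by auto
  have "u \<noteq> v" using uv by auto
  have gb: "\<And>p q. g p - g q \<le> dist p q" and hb: "\<And>p q. h p - h q \<le> dist p q"
    using gh ball_lip1 by blast+
  have A1: "g u - g v > (1 - \<epsilon>/2) * dist u v" using uv hb[of v u] by (simp add: dist_commute algebra_simps)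
  have A2: "h v - h u > (1 - \<epsilon>/2) * dist u v" using uv gb[of u v] by (simp add: dist_commute algebra_simps)
  have gN: "\<And>x. x \<in> N \<Longrightarrow> \<bar>g x - f x\<bar> < \<eta>" and hN: "\<And>x. x \<in> N \<Longrightarrow> \<bar>h x - f x\<bar> < \<eta>"
    using gh by (auto simp: U_def)
  show ?thesis
  proof (intro exI conjI ballI)
    show "u \<noteq> v" by fact
    fix x y assume x: "x \<in> N" and y: "y \<in> N"
    have E: "\<bar>f x - f y\<bar> + (1 - \<epsilon>/2) * dist u v - \<epsilon> * m / 8 < dist x u + dist y v"
    proof -
      have "(1 - \<epsilon>/2) * dist u v + (f y - f x) - 2 * \<eta> < dist x u + dist y v"
        using A1 gb[of u x] gb[of y v] gN[OF x] gN[OF y] by (simp add: dist_commute abs_less_iff)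
      moreover have "(1 - \<epsilon>/2) * dist u v + (f x - f y) - 2 * \<eta> < dist x u + dist y v"
        using A2 hb[of x u] hb[of v y] hN[OF x] hN[OF y] by (simp add: dist_commute abs_less_iff)
      moreover have "2 * \<eta> = \<epsilon> * m / 8" unfolding \<eta>_def by simp
      ultimately show ?thesis by (simp add: abs_if)
    qed
    show "(1 - \<epsilon>) * (\<bar>f x - f y\<bar> + dist u v) \<le> dist x u + dist y v"
    proof (cases "x = y")
      case True
      have "(1 - \<epsilon>) * dist u v \<le> dist u v" using e zero_le_dist[of u v] by (simp add: algebra_simps)
      also have "\<dots> \<le> dist x u + dist y v" using True dist_triangle[of u v x] by (simp add: dist_commute)
      finally show ?thesis using True by simp
    next
      case False
      show ?thesis
      proof (rule key_arith[OF e(1) m(1) E])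
        show "dist x y - dist u v \<le> dist x u + dist y v"
          using dist_triangle[of x y u] dist_triangle[of u y v] by (simp add: dist_commute)
        show "\<bar>f x - f y\<bar> \<le> dist x y" using ball_lip1[OF f, of x y] ball_lip1[OF f, of y x]
          by (simp add: dist_commute)
        show "m \<le> dist x y" using m(2)[OF x y False] .
      qed auto
    qed
  qed
qed

lemma D2P_LTP:
  assumes "wstar_D2P z" shows "Lip_LTP z"
  unfolding Lip_LTP_def
proof (intro allI impI, elim conjE)
  fix N :: "'a set" and \<epsilon> :: real and f assume N: "finite N" and e: "\<epsilon> > 0" and f: "f \<in> Lip0_ball z"
  define \<epsilon>' where "\<epsilon>' = min \<epsilon> (1/2)"
  obtain u v where uv: "u \<noteq> v" "\<forall>x\<in>N. \<forall>y\<in>N.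
        (1 - \<epsilon>') * (\<bar>f x - f y\<bar> + dist u v) \<le> dist x u + dist y v"
  proof -
    have "0 < \<epsilon>'" "\<epsilon>' \<le> 1/2" using e unfolding \<epsilon>'_def by auto
    from D2P_LTP_aux[OF assms N this f] show ?thesis using that by blast
  qed
  show "\<exists>u v. u \<noteq> v \<and> (\<forall>x\<in>N. \<forall>y\<in>N. (1 - \<epsilon>) * (\<bar>f x - f y\<bar> + dist u v) \<le> dist x u + dist y v)"
  proof (intro exI conjI ballI)
    fix x y assume "x \<in> N" "y \<in> N"
    have "(1 - \<epsilon>) * (\<bar>f x - f y\<bar> + dist u v) \<le> (1 - \<epsilon>') * (\<bar>f x - f y\<bar> + dist u v)"
      by (intro mult_right_mono) (auto simp: \<epsilon>'_def)
    also have "\<dots> \<le> dist x u + dist y v" using uv \<open>x \<in> N\<close> \<open>y \<in> N\<close> by blast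
    finally show "(1 - \<epsilon>) * (\<bar>f x - f y\<bar> + dist u v) \<le> dist x u + dist y v" .
  qed (rule uv(1))
qed



lemma nbhd_fin:
  assumes U: "wstar_open z U" and f: "f \<in> U" "f \<in> Lip0_ball z"
  shows "\<exists>N0 \<eta>. finite N0 \<and> \<eta> > 0 \<and>
     (\<forall>g\<in>Lip0_ball z. (\<forall>x\<in>N0. \<bar>g x - f x\<bar> \<le> \<eta>) \<longrightarrow> g \<in> U)"
proof -
  obtain \<Phi> e where \<Phi>: "finite \<Phi>" "\<Phi> \<subseteq> free_space z" "e > 0"
    and sub: "{g \<in> Lip0 z. \<forall>\<phi>\<in>\<Phi>. \<bar>\<phi> g - \<phi> f\<bar> < e} \<subseteq> U"
    using U f unfolding wstar_open_def by blast
  have "\<forall>\<phi>\<in>\<Phi>. \<exists>S a. finite S \<and> (\<forall>g\<in>Lip0 z. \<bar>\<phi> g - (\<Sum>x\<in>S. a x * g x)\<bar> \<le> (e/3) * lip_norm g)"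
  proof
    fix \<phi> assume "\<phi> \<in> \<Phi>"
    then have "\<forall>e>0. \<exists>S a. finite S \<and> (\<forall>f\<in>Lip0 z. \<bar>\<phi> f - (\<Sum>x\<in>S. a x * f x)\<bar> \<le> e * lip_norm f)"
      using \<Phi>(2) unfolding free_space_def by blast
    then show "\<exists>S a. finite S \<and> (\<forall>g\<in>Lip0 z. \<bar>\<phi> g - (\<Sum>x\<in>S. a x * g x)\<bar> \<le> (e/3) * lip_norm g)"
      using \<Phi>(3) by (metis divide_pos_pos zero_less_numeral)
  qed
  then obtain S A where SA: "\<And>\<phi>. \<phi>\<in>\<Phi> \<Longrightarrow> finite (S \<phi>)"
    "\<And>\<phi> g. \<phi>\<in>\<Phi> \<Longrightarrow> g \<in> Lip0 z \<Longrightarrow> \<bar>\<phi> g - (\<Sum>x\<in>S \<phi>. A \<phi> x * g x)\<bar> \<le> (e/3) * lip_norm g"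
    by metis
  define K where "K = 1 + (\<Sum>\<phi>\<in>\<Phi>. \<Sum>x\<in>S \<phi>. \<bar>A \<phi> x\<bar>)"
  have Kge: "\<And>\<phi>. \<phi> \<in> \<Phi> \<Longrightarrow> (\<Sum>x\<in>S \<phi>. \<bar>A \<phi> x\<bar>) \<le> K - 1"
    unfolding K_def using \<Phi>(1) by (auto intro!: member_le_sum sum_nonneg)
  have Kpos: "K > 0" unfolding K_def by (auto intro!: sum_nonneg add_pos_nonneg)
  define \<eta> where "\<eta> = e / (3 * K)"
  have \<eta>pos: "\<eta> > 0" unfolding \<eta>_def using Kpos \<Phi>(3) by simp
  show ?thesis
  proof (intro exI conjI ballI impI)
    show "finite (\<Union>(S ` \<Phi>))" using \<Phi>(1) SA(1) by auto
    show "\<eta> > 0" by fact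
    fix g assume g: "g \<in> Lip0_ball z" and close: "\<forall>x\<in>\<Union>(S ` \<Phi>). \<bar>g x - f x\<bar> \<le> \<eta>"
    have gL: "g \<in> Lip0 z" "lip_norm g \<le> 1" and fL: "f \<in> Lip0 z" "lip_norm f \<le> 1"
      using g f by (auto simp: Lip0_ball_def)
    have "\<bar>\<phi> g - \<phi> f\<bar> < e" if \<phi>: "\<phi> \<in> \<Phi>" for \<phi>
    proof -
      have a: "\<bar>\<phi> g - (\<Sum>x\<in>S \<phi>. A \<phi> x * g x)\<bar> \<le> e/3"
        using SA(2)[OF \<phi> gL(1)] mult_left_le[OF gL(2), of "e/3"] \<Phi>(3) by linarith
      have b: "\<bar>\<phi> f - (\<Sum>x\<in>S \<phi>. A \<phi> x * f x)\<bar> \<le> e/3"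
        using SA(2)[OF \<phi> fL(1)] mult_left_le[OF fL(2), of "e/3"] \<Phi>(3) by linarith
      have "\<bar>(\<Sum>x\<in>S \<phi>. A \<phi> x * g x) - (\<Sum>x\<in>S \<phi>. A \<phi> x * f x)\<bar>
            = \<bar>\<Sum>x\<in>S \<phi>. A \<phi> x * (g x - f x)\<bar>" by (simp add: sum_subtractf[symmetric] algebra_simps)
      also have "\<dots> \<le> (\<Sum>x\<in>S \<phi>. \<bar>A \<phi> x\<bar> * \<eta>)"
      proof (rule order_trans[OF sum_abs], rule sum_mono)
        fix x assume "x \<in> S \<phi>"
        then have "\<bar>g x - f x\<bar> \<le> \<eta>" using close \<phi> by blast
        then show "\<bar>A \<phi> x * (g x - f x)\<bar> \<le> \<bar>A \<phi> x\<bar> * \<eta>"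
          unfolding abs_mult by (intro mult_left_mono) auto
      qed
      also have "\<dots> = (\<Sum>x\<in>S \<phi>. \<bar>A \<phi> x\<bar>) * \<eta>" by (simp add: sum_distrib_right)
      also have "\<dots> \<le> (K - 1) * \<eta>" using Kge[OF \<phi>] \<eta>pos by (intro mult_right_mono) auto
      also have "\<dots> < K * \<eta>" using \<eta>pos by simp
      also have "\<dots> = e/3" unfolding \<eta>_def using Kpos by simp
      finally have c: "\<bar>(\<Sum>x\<in>S \<phi>. A \<phi> x * g x) - (\<Sum>x\<in>S \<phi>. A \<phi> x * f x)\<bar> < e/3" .
      show ?thesis using a b c by linarith
    qed
    then show "g \<in> U" using sub gL(1) by blast
  qed
qed

lemma bump:
  fixes f' :: "'a::metric_space \<Rightarrow> real"
  assumes N: "finite N" "N \<noteq> {}"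
    and h1: "\<And>x y. x\<in>N \<Longrightarrow> y\<in>N \<Longrightarrow> f' x - f' y \<le> dist x y"
    and h2: "\<And>x y. x\<in>N \<Longrightarrow> y\<in>N \<Longrightarrow> f' y - f' x + r \<le> dist x u + dist y v"
    and h3: "r \<le> dist u v"
  shows "\<exists>g. 1-lipschitz_on UNIV g \<and> (\<forall>x\<in>N. g x = f' x) \<and> g u - g v \<ge> r"
proof -
  define L where "L p = Max ((\<lambda>x. f' x - dist x p) ` N)" for p
  have Lge: "f' x - dist x p \<le> L p" if "x \<in> N" for x p
    unfolding L_def using N that by auto
  have Lin: "\<exists>x\<in>N. L p = f' x - dist x p" for p
  proof -
    have "L p \<in> (\<lambda>x. f' x - dist x p) ` N" unfolding L_def using N by (intro Max_in) auto
    then show ?thesis by auto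
  qed
  have Llip: "L p \<le> L q + dist p q" for p q
  proof -
    obtain x where x: "x \<in> N" "L p = f' x - dist x p" using Lin by blast
    have "f' x - dist x q \<le> L q" by (rule Lge[OF x(1)])
    moreover have "dist x q \<le> dist x p + dist p q" by (rule dist_triangle)
    ultimately show ?thesis using x by linarith
  qed
  define g where "g p = max (L p) (L v + r - dist u p)" for p
  have glip: "g p \<le> g q + dist p q" for p q
  proof -
    have "dist u q \<le> dist u p + dist p q" by (rule dist_triangle)
    then show ?thesis using Llip[of p q] unfolding g_def by linarith
  qed
  show ?thesis
  proof (intro exI conjI ballI)
    show "1-lipschitz_on UNIV g"
    proof (intro lipschitz_onI)
      fix x y :: 'a
      have "g x - g y \<le> dist x y" "g y - g x \<le> dist x y" using glip[of x y] glip[of y x]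
        by (auto simp: dist_commute)
      then show "dist (g x) (g y) \<le> 1 * dist x y" by (simp add: dist_real_def abs_le_iff)
    qed simp
    fix x assume x: "x \<in> N"
    have "L x = f' x"
    proof (rule antisym)
      obtain y where y: "y \<in> N" "L x = f' y - dist y x" using Lin by blast
      then show "L x \<le> f' x" using h1[OF y(1) x] by linarith
      show "f' x \<le> L x" using Lge[OF x, of x] by simp
    qed
    moreover have "L v + r - dist u x \<le> f' x"
    proof -
      obtain y where y: "y \<in> N" "L v = f' y - dist y v" using Lin by blast
      then show ?thesis using h2[OF x y(1)] by (simp add: dist_commute)
    qed
    ultimately show "g x = f' x" unfolding g_def by simp
  next
    have "g v = L v" unfolding g_def using h3 by (simp add: dist_commute)
    moreover have "g u \<ge> L v + r" unfolding g_def by simp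
    ultimately show "g u - g v \<ge> r" by simp
  qed
qed



lemma LTP_pair:
  assumes LTP: "Lip_LTP z" and U: "wstar_open z U" and f: "f \<in> U" "f \<in> Lip0_ball z" and t: "t < 2"
  shows "\<exists>g h. g \<in> U \<inter> Lip0_ball z \<and> h \<in> U \<inter> Lip0_ball z \<and> lip_norm (\<lambda>x. g x - h x) > t"
proof -
  obtain N0 \<eta> where N0: "finite N0" "\<eta> > 0"
    and nb: "\<And>g. g\<in>Lip0_ball z \<Longrightarrow> (\<forall>x\<in>N0. \<bar>g x - f x\<bar> \<le> \<eta>) \<Longrightarrow> g \<in> U"
    using nbhd_fin[OF U f] by blast
  define N where "N = insert z N0"
  have N: "finite N" "N \<noteq> {}" "z \<in> N" using N0 by (auto simp: N_def)
  define K where "K = 1 + (\<Sum>x\<in>N. \<bar>f x\<bar>)"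
  have Kpos: "K > 0" unfolding K_def by (auto intro!: sum_nonneg add_pos_nonneg)
  have fK: "\<bar>f x\<bar> \<le> K" if "x \<in> N" for x
  proof -
    have "\<bar>f x\<bar> \<le> (\<Sum>x\<in>N. \<bar>f x\<bar>)" using N that by (intro member_le_sum) auto
    then show ?thesis unfolding K_def by simp
  qed
  define \<epsilon> where "\<epsilon> = min (1/2) (min ((2-t)/4) (\<eta>/K))"
  have e: "\<epsilon> > 0" "\<epsilon> \<le> 1/2" "\<epsilon> \<le> (2-t)/4" "\<epsilon> \<le> \<eta>/K"
  proof -
    show "\<epsilon> > 0" unfolding \<epsilon>_def using t Kpos N0 by auto
    show "\<epsilon> \<le> 1/2" unfolding \<epsilon>_def by (rule min.cobounded1)
    show "\<epsilon> \<le> (2-t)/4" unfolding \<epsilon>_def by (meson min.cobounded1 min.cobounded2 order_trans)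
    show "\<epsilon> \<le> \<eta>/K" unfolding \<epsilon>_def by (meson min.cobounded2 order_trans)
  qed
  have fz: "f z = 0" and fl: "\<And>p q. f p - f q \<le> dist p q"
    using f(2) ball_lip1[OF f(2)] by (auto simp: Lip0_ball_def Lip0_def)
  obtain u v where uv: "u \<noteq> v" and
    c: "\<And>x y. x\<in>N \<Longrightarrow> y\<in>N \<Longrightarrow> (1 - \<epsilon>) * (\<bar>f x - f y\<bar> + dist u v) \<le> dist x u + dist y v"
  proof -
    have "\<exists>u v. u \<noteq> v \<and> (\<forall>x\<in>N. \<forall>y\<in>N.
        (1 - \<epsilon>) * (\<bar>f x - f y\<bar> + dist u v) \<le> dist x u + dist y v)"
      using LTP N(1) e(1) f(2) unfolding Lip_LTP_def by simp
    then show ?thesis using that by metis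
  qed
  define f' where "f' x = (1 - \<epsilon>) * f x" for x
  define r where "r = (1 - \<epsilon>) * dist u v"
  have h1: "f' x - f' y \<le> dist x y" for x y
  proof -
    have "f' x - f' y = (1 - \<epsilon>) * (f x - f y)" unfolding f'_def by (simp add: algebra_simps)
    also have "\<dots> \<le> (1 - \<epsilon>) * dist x y" using e fl by (intro mult_left_mono) auto
    also have "\<dots> \<le> dist x y" using e by (simp add: algebra_simps)
    finally show ?thesis .
  qed
  have h2: "f' y - f' x + r \<le> dist x u + dist y v" if "x \<in> N" "y \<in> N" for x y
  proof -
    have "f' y - f' x + r = (1 - \<epsilon>) * ((f y - f x) + dist u v)"
      unfolding f'_def r_def by (simp add: algebra_simps)
    also have "\<dots> \<le> (1 - \<epsilon>) * (\<bar>f x - f y\<bar> + dist u v)" using e by (intro mult_left_mono) auto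
    also have "\<dots> \<le> dist x u + dist y v" by (rule c[OF that])
    finally show ?thesis .
  qed
  have h2': "f' y - f' x + r \<le> dist x v + dist y u" if "x \<in> N" "y \<in> N" for x y
  proof -
    have "f' y - f' x + r = (1 - \<epsilon>) * ((f y - f x) + dist u v)"
      unfolding f'_def r_def by (simp add: algebra_simps)
    also have "\<dots> \<le> (1 - \<epsilon>) * (\<bar>f y - f x\<bar> + dist u v)" using e by (intro mult_left_mono) auto
    also have "\<dots> \<le> dist y u + dist x v" by (rule c[OF that(2,1)])
    finally show ?thesis by simp
  qed
  have h3: "r \<le> dist u v" "r \<le> dist v u" unfolding r_def using e by (auto simp: algebra_simps dist_commute)
  obtain g1 where g1: "1-lipschitz_on UNIV g1" "\<forall>x\<in>N. g1 x = f' x" "g1 u - g1 v \<ge> r"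
    using bump[OF N(1,2) h1 h2 h3(1)] by blast
  obtain g2 where g2: "1-lipschitz_on UNIV g2" "\<forall>x\<in>N. g2 x = f' x" "g2 v - g2 u \<ge> r"
    using bump[OF N(1,2) h1 h2' h3(2)] by blast
  have inU: "g \<in> U \<inter> Lip0_ball z" if g: "1-lipschitz_on UNIV g" "\<forall>x\<in>N. g x = f' x" for g
  proof -
    have gz: "g z = 0" using g(2) N(3) fz unfolding f'_def by simp
    have gb: "g \<in> Lip0_ball z" unfolding Lip0_ball_def Lip0_def using gz g(1) lip_norm_le[OF g(1)] by auto
    have "\<bar>g x - f x\<bar> \<le> \<eta>" if x: "x \<in> N0" for x
    proof -
      have xN: "x \<in> N" using x by (simp add: N_def)
      have "g x - f x = - (\<epsilon> * f x)" using g(2) xN unfolding f'_def by (simp add: algebra_simps)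
      then have "\<bar>g x - f x\<bar> = \<epsilon> * \<bar>f x\<bar>" using e by (simp add: abs_mult)
      also have "\<dots> \<le> (\<eta>/K) * K" using e fK[OF xN] by (intro mult_mono) auto
      also have "\<dots> = \<eta>" using Kpos by simp
      finally show ?thesis .
    qed
    then show ?thesis using nb[OF gb] gb by blast
  qed
  have "g1 \<in> U \<inter> Lip0_ball z" "g2 \<in> U \<inter> Lip0_ball z" using inU[OF g1(1,2)] inU[OF g2(1,2)] by auto
  moreover have "lip_norm (\<lambda>x. g1 x - g2 x) > t"
  proof -
    have L: "(\<lambda>x. g1 x - g2 x) \<in> Lip0 z" using Lip0_diff \<open>g1 \<in> U \<inter> Lip0_ball z\<close> \<open>g2 \<in> U \<inter> Lip0_ball z\<close>
      by (auto simp: Lip0_ball_def)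
    then obtain C where C: "C-lipschitz_on UNIV (\<lambda>x. g1 x - g2 x)" by (auto simp: Lip0_def)
    have d: "dist u v > 0" using uv by simp
    have "2 * r \<le> (g1 u - g2 u) - (g1 v - g2 v)" using g1(3) g2(3) by linarith
    then have "2 * (1 - \<epsilon>) * dist u v \<le> \<bar>(g1 u - g2 u) - (g1 v - g2 v)\<bar>"
      unfolding r_def by linarith
    also have "\<dots> \<le> lip_norm (\<lambda>x. g1 x - g2 x) * dist u v" by (rule lip_norm_bound[OF C])
    finally have "2 * (1 - \<epsilon>) \<le> lip_norm (\<lambda>x. g1 x - g2 x)" using d by simp
    moreover have "4 * \<epsilon> \<le> 2 - t" using e(3) by simp
    moreover have "t < 2 * (1 - \<epsilon>)" using calculation(2) e(1) by (simp add: algebra_simps)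
    ultimately show ?thesis by linarith
  qed
  ultimately show ?thesis by blast
qed

lemma LTP_D2P:
  assumes "Lip_LTP z" shows "wstar_D2P z"
  unfolding wstar_D2P_def
proof (intro allI impI, elim conjE)
  fix U assume U: "wstar_open z U" and ne: "U \<inter> Lip0_ball z \<noteq> {}"
  then obtain f where f: "f \<in> U" "f \<in> Lip0_ball z" by blast
  let ?S = "{lip_norm (\<lambda>x. g x - h x) | g h. g \<in> U \<inter> Lip0_ball z \<and> h \<in> U \<inter> Lip0_ball z}"
  have Sne: "?S \<noteq> {}" using f by blast
  have Sle: "\<forall>s\<in>?S. s \<le> 2"
  proof safe
    fix g h assume "g \<in> U" "g \<in> Lip0_ball z" "h \<in> U" "h \<in> Lip0_ball z"
    then show "lip_norm (\<lambda>x. g x - h x) \<le> 2" using Lip0_diff(2)[of g z h]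
      by (auto simp: Lip0_ball_def)
  qed
  have up: "Sup ?S \<le> 2" using Sne Sle by (intro cSup_least) auto
  show "Sup ?S = 2"
  proof (rule ccontr)
    assume "Sup ?S \<noteq> 2"
    then have "Sup ?S < 2" using up by simp
    from LTP_pair[OF assms U f this] obtain g h where
      "g \<in> U \<inter> Lip0_ball z" "h \<in> U \<inter> Lip0_ball z" "lip_norm (\<lambda>x. g x - h x) > Sup ?S" by blast
    moreover have "bdd_above ?S" using Sle by (intro bdd_aboveI[of _ 2]) auto
    ultimately have "lip_norm (\<lambda>x. g x - h x) \<le> Sup ?S" by (intro cSup_upper) blast+
    with \<open>lip_norm (\<lambda>x. g x - h x) > Sup ?S\<close> show False by linarith
  qed
qed


theorem proposition4p2:
  fixes z :: "'a::metric_space"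
  shows "wstar_D2P z \<longleftrightarrow> Lip_LTP z"
  using D2P_LTP LTP_D2P by blast

end
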